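(* In the $q$-shuffle algebra $\mathbb V$ the following hold. (i) Each of the families $\{W_{-k}\}_{k\in\mathbb N}$, $\{W_{k+1}\}_{k\in\mathbb N}$, $\{G_{k+1}\}_{k\in\mathbb N}$, $\{\tilde G_{k+1}\}_{k\in\mathbb N}$ consists of mutually commuting elements (with respect to $\star$). (ii) An alternating word is of the form $W_{-k}$ ($k\in\mathbb N$) if and only if it commutes with $x$. (iii) An alternating word is of the form $W_{k+1}$ ($k\in\mathbb N$) if and only if it commutes with $y$. (iv) An alternating word is of the form $G_{k+1}$ ($k\in\mathbb N$) if and only if it commutes with $q\,y\star x-q^{-1}x\star y$. (v) An alternating word is of the form $\tilde G_{k+1}$ ($k\in\mathbb N$) if and only if it commutes with $q\,x\star y-q^{-1}y\star x$.
   Context: Let $\mathbb F$ be a field and let $q\in\mathbb F$ be nonzero and not a root of unity. Let $\mathbb V$ be the free associative $\mathbb F$-algebra on noncommuting $x,y$, with basis the words (including $1$). Juxtaposition denotes concatenation. Set $\langle x,x\rangle=\langle y,y\rangle=2$ and $\langle x,y\rangle=\langle y,x\rangle=-2$. The $q$-shuffle product $\star$ is the bilinear product determined as follows: - $1\star v=v\star 1=v$; - for nontrivial words $u=u_1\cdots u_r$ and $v=v_1\cdots v_s$, $$u\star v=u_1((u_2\cdots u_r)\star v)+v_1(u\star(v_2\cdots v_s))q^{\langle u_1,v_1\rangle+\cdots+\langle u_r,v_1\rangle}.$$ This makes $\mathbb V$ an associative algebra, the $q$-shuffle algebra. "Commute" means $a\star b=b\star a$. A word $v_1\cdots v_n$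 is alternating if $n\ge1$ and $v_{i-1}\ne v_i$ for $2\le i\le n$. For $k\in\mathbb N$: - $W_{-k}=xyx\cdots x$ is the alternating word of length $2k+1$ beginning and ending with $x$; - $W_{k+1}=yxy\cdots y$ is the alternating word of length $2k+1$ beginning and ending with $y$; - $G_{k+1}=yxyx\cdots yx$ is the word of length $2k+2$; - $\tilde G_{k+1}=xyxy\cdots xy$ is the word of length $2k+2$. Every alternating word is exactly one of these. *)

theory Defs
  imports Main "HOL-Library.Poly_Mapping"
begin

datatype letter = X | Y

type_synonym 'a qV = "letter list \<Rightarrow>\<^sub>0 'a"

definition ip :: "letter \<Rightarrow> letter \<Rightarrow> int" where
  "ip a b = (if a = b then 2 else -2)"

definition word :: "letter list \<Rightarrow> 'a::field qV" where
  "word w = Poly_Mapping.single w 1"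

definition smul :: "'a::field \<Rightarrow> 'a qV \<Rightarrow> 'a qV" where
  "smul c p = Poly_Mapping.map (\<lambda>t. c * t) p"

definition prep :: "letter \<Rightarrow> 'a::field qV \<Rightarrow> 'a qV" where
  "prep a p = (\<Sum>w\<in>Poly_Mapping.keys p. Poly_Mapping.single (a # w) (Poly_Mapping.lookup p w))"

function qsh :: "'a::field \<Rightarrow> letter list \<Rightarrow> letter list \<Rightarrow> 'a qV" where
  "qsh q [] v = word v"
| "qsh q (a # u) [] = word (a # u)"
| "qsh q (a # u) (b # v) =
     prep a (qsh q u (b # v))
     + smul (q powi (\<Sum>c\<leftarrow>a # u. ip c b)) (prep b (qsh q (a # u) v))"
  by pat_completeness auto
termination
  by (relation "measure (\<lambda>(q, u, v). length u + length v)") auto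

definition qprod :: "'a::field \<Rightarrow> 'a qV \<Rightarrow> 'a qV \<Rightarrow> 'a qV" where
  "qprod q A B = (\<Sum>u\<in>Poly_Mapping.keys A. \<Sum>v\<in>Poly_Mapping.keys B. smul (Poly_Mapping.lookup A u * Poly_Mapping.lookup B v) (qsh q u v))"

definition qcommute :: "'a::field \<Rightarrow> 'a qV \<Rightarrow> 'a qV \<Rightarrow> bool" where
  "qcommute q A B \<longleftrightarrow> qprod q A B = qprod q B A"

definition alternating :: "letter list \<Rightarrow> bool" where
  "alternating w \<longleftrightarrow> length w \<ge> 1 \<and> (\<forall>i. 2 \<le> i \<and> i \<le> length w \<longrightarrow> w ! (i - 2) \<noteq> w ! (i - 1))"

definition alt_word :: "letter \<Rightarrow> nat \<Rightarrow> letter list" where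
  "alt_word a n = List.map (\<lambda>i. if even i then a else (if a = X then Y else X)) [0..<n]"

definition Wneg :: "nat \<Rightarrow> letter list" where
  "Wneg k = alt_word X (2 * k + 1)"

definition Wpos :: "nat \<Rightarrow> letter list" where
  "Wpos k = alt_word Y (2 * k + 1)"

definition G :: "nat \<Rightarrow> letter list" where
  "G k = alt_word Y (2 * k + 2)"

definition Gt :: "nat \<Rightarrow> letter list" where
  "Gt k = alt_word X (2 * k + 2)"

end

theory Submission
  imports Defs
begin

definition f :: "'a::field \<Rightarrow> letter list \<Rightarrow> letter list \<Rightarrow> letter list \<Rightarrow> 'a" where
  "f q u v w = Poly_Mapping.lookup (qsh q u v) w"

definition wt :: "letter list \<Rightarrow> letter \<Rightarrow> int" where
  "wt u b = sum_list (List.map (\<lambda>c. ip c b) u)"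

lemma lookup_smul: "Poly_Mapping.lookup (smul c p) w = c * Poly_Mapping.lookup p w"
  by (simp add: smul_def map.rep_eq when_def)

lemma lookup_word: "Poly_Mapping.lookup (word v :: 'a::field qV) w = (if w = v then 1 else 0)"
  by (simp add: word_def lookup_single when_def)

lemma lookup_prep_Nil: "Poly_Mapping.lookup (prep a p) [] = 0"
  by (simp add: prep_def lookup_sum lookup_single when_def)

lemma lookup_prep_Cons: "Poly_Mapping.lookup (prep a p) (c # w) = (if a = c then Poly_Mapping.lookup p w else 0)"
proof -
  have "Poly_Mapping.lookup (prep a p) (c # w) =
     (\<Sum>v\<in>Poly_Mapping.keys p. (if v = w \<and> a = c then Poly_Mapping.lookup p v else 0))"
    unfolding prep_def lookup_sum by (intro sum.cong) (auto simp: lookup_single when_def)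
  also have "\<dots> = (if a = c then Poly_Mapping.lookup p w else 0)"
    by (cases "w \<in> Poly_Mapping.keys p") (auto simp: in_keys_iff)
  finally show ?thesis .
qed

lemma f_Nil_left: "f q [] v w = (if w = v then 1 else 0)"
  by (simp add: f_def lookup_word)

lemma f_Nil_right: "f q u [] w = (if w = u then 1 else 0)"
  by (cases u) (simp_all add: f_def lookup_word)

lemma f_Nil_word: "f q u v [] = (if u = [] \<and> v = [] then 1 else 0)"
  by (cases u; cases v) (simp_all add: f_def lookup_word lookup_add lookup_smul lookup_prep_Nil)

lemma f_Cons:
  "f q u v (c # w) =
     (case u of [] \<Rightarrow> 0 | a # u' \<Rightarrow> if a = c then f q u' v w else 0)
   + (case v of [] \<Rightarrow> 0 | b # v' \<Rightarrow> if b = c then q powi (wt u b) * f q u v' w else 0)"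
proof (cases u)
  case Nil
  then show ?thesis by (cases v) (auto simp: f_Nil_left wt_def)
next
  case (Cons a u')
  then show ?thesis
  proof (cases v)
    case Nil
    then show ?thesis using Cons by (auto simp: f_Nil_right)
  next
    case (Cons b v')
    then show ?thesis using \<open>u = a # u'\<close>
      by (simp add: f_def lookup_add lookup_smul lookup_prep_Cons wt_def)
  qed
qed


fun oth :: "letter \<Rightarrow> letter" where "oth X = Y" | "oth Y = X"

lemma oth_oth[simp]: "oth (oth a) = a" by (cases a) auto
lemma oth_neq[simp]: "oth a \<noteq> a" "a \<noteq> oth a" by (cases a; simp)+
lemma letter_cases: "c = a \<or> c = oth a" by (cases a; cases c) auto
lemma oth_alt: "(if a = X then Y else X) = oth a" by (cases a) auto

lemma ip_simps[simp]: "ip a a = 2" "ip a (oth a) = -2" "ip (oth a) a = -2"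
  by (simp_all add: ip_def)

lemma wt_Nil[simp]: "wt [] d = 0" by (simp add: wt_def)
lemma wt_Cons[simp]: "wt (x # u) d = ip x d + wt u d" by (simp add: wt_def)

lemma alt_word_0[simp]: "alt_word a 0 = []" by (simp add: alt_word_def)
lemma alt_word_Suc: "alt_word a (Suc n) = a # alt_word (oth a) n"
proof -
  have "[0..<Suc n] = 0 # List.map Suc [0..<n]" by (simp add: map_Suc_upt upt_conv_Cons)
  then show ?thesis
    by (cases a) (auto simp: alt_word_def oth_alt comp_def)
qed

definition E :: "letter \<Rightarrow> nat \<Rightarrow> letter list" where "E c m = alt_word c (2 * m)"

lemma E_0[simp]: "E c 0 = []" by (simp add: E_def)
lemma E_Suc[simp]: "E c (Suc m) = c # oth c # E c m"
  by (simp add: E_def alt_word_Suc)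
lemma wt_E[simp]: "wt (E c m) d = 0"
  by (induction m) (cases c; cases d; simp add: ip_def)+
lemma E_Nil_iff[simp]: "E c m = [] \<longleftrightarrow> m = 0" by (cases m) auto

lemma main_ind:
  fixes q :: "'a::field"
  assumes q0: "q \<noteq> 0"
  shows "\<forall>k l. f q (a # E (oth a) k) (a # E (oth a) l) w = f q (a # E (oth a) l) (a # E (oth a) k) w
   \<and> f q (E (oth a) k) (a # E (oth a) l) w - q^2 * f q (a # E (oth a) l) (E (oth a) k) w
       = f q (E (oth a) l) (a # E (oth a) k) w - q^2 * f q (a # E (oth a) k) (E (oth a) l) w
   \<and> f q (E (oth a) k) (E (oth a) l) w = f q (E (oth a) l) (E (oth a) k) w
   \<and> f q (a # E (oth a) k) (E (oth a) (Suc l)) w - f q (E (oth a) (Suc l)) (a # E (oth a) k) w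
       = f q (a # E (oth a) l) (E (oth a) (Suc k)) w - f q (E (oth a) (Suc k)) (a # E (oth a) l) w"
proof (induction w)
  case Nil
  then show ?case by (auto simp: f_Nil_word)
next
  case (Cons c w)
  show ?case
  proof (intro allI conjI)
    fix k l
    show "f q (a # E (oth a) k) (a # E (oth a) l) (c # w) = f q (a # E (oth a) l) (a # E (oth a) k) (c # w)"
      using Cons.IH[rule_format, of k l] letter_cases[of c a]
      by (auto simp: f_Cons algebra_simps)
    show "f q (E (oth a) k) (a # E (oth a) l) (c # w) - q^2 * f q (a # E (oth a) l) (E (oth a) k) (c # w)
       = f q (E (oth a) l) (a # E (oth a) k) (c # w) - q^2 * f q (a # E (oth a) k) (E (oth a) l) (c # w)"
      using Cons.IH[rule_format, of "k - 1" l] Cons.IH[rule_format, of k "l - 1"]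
        Cons.IH[rule_format, of "k - 1" "l - 1"] Cons.IH[rule_format, of k l]
        letter_cases[of c a] q0
      by (cases k; cases l; auto simp: f_Cons f_Nil_left f_Nil_right field_simps power2_eq_square power_int_minus)
    show "f q (E (oth a) k) (E (oth a) l) (c # w) = f q (E (oth a) l) (E (oth a) k) (c # w)"
      using Cons.IH[rule_format, of "k - 1" l] Cons.IH[rule_format, of k "l - 1"]
        Cons.IH[rule_format, of "k - 1" "l - 1"] Cons.IH[rule_format, of k l]
        letter_cases[of c a] q0
      by (cases k; cases l; auto simp: f_Cons f_Nil_left f_Nil_right field_simps power2_eq_square power_int_minus)
    show "f q (a # E (oth a) k) (E (oth a) (Suc l)) (c # w) - f q (E (oth a) (Suc l)) (a # E (oth a) k) (c # w)
       = f q (a # E (oth a) l) (E (oth a) (Suc k)) (c # w) - f q (E (oth a) (Suc k)) (a # E (oth a) l) (c # w)"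
      using Cons.IH[rule_format, of "k - 1" l] Cons.IH[rule_format, of k "l - 1"]
        Cons.IH[rule_format, of "k - 1" "l - 1"] Cons.IH[rule_format, of k l] Cons.IH[rule_format, of k "Suc l"] Cons.IH[rule_format, of "Suc k" l]
        letter_cases[of c a] q0
      by (cases k; cases l; auto simp: f_Cons f_Nil_left f_Nil_right field_simps power2_eq_square power_int_minus)
  qed
qed


lemma keys_word[simp]: "Poly_Mapping.keys (word u :: 'a::field qV) = {u}"
  by (simp add: word_def)
lemma lookup_word1[simp]: "Poly_Mapping.lookup (word u :: 'a::field qV) u = 1"
  by (simp add: word_def)

lemma smul1: "smul 1 p = p"
  by (rule poly_mapping_eqI) (simp add: lookup_smul)

lemma qprod_word: "qprod q (word u) (word v) = qsh q u v"
  by (simp add: qprod_def smul1)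

lemma qprod_single_r: "c \<noteq> 0 \<Longrightarrow> qprod q (word u) (Poly_Mapping.single v c) = smul c (qsh q u v)"
  by (simp add: qprod_def)
lemma qprod_single_l: "c \<noteq> 0 \<Longrightarrow> qprod q (Poly_Mapping.single v c) (word u) = smul c (qsh q v u)"
  by (simp add: qprod_def)

lemma qcommute_words: "qcommute q (word u) (word v) \<longleftrightarrow> (\<forall>w. f q u v w = f q v u w)"
  by (auto simp: qcommute_def qprod_word f_def intro: poly_mapping_eqI)

lemma qcommute_single:
  assumes "c \<noteq> 0"
  shows "qcommute q (word u) (Poly_Mapping.single v c) \<longleftrightarrow> qcommute q (word u) (word v)"
proof -
  have "qcommute q (word u) (Poly_Mapping.single v c) \<longleftrightarrow> (\<forall>w. c * f q u v w = c * f q v u w)"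
    using assms by (auto simp: qcommute_def qprod_single_r qprod_single_l f_def lookup_smul
       intro: poly_mapping_eqI dest: arg_cong[where f="\<lambda>p. Poly_Mapping.lookup p _"])
  also have "\<dots> \<longleftrightarrow> (\<forall>w. f q u v w = f q v u w)" using assms by simp
  finally show ?thesis by (simp add: qcommute_words)
qed

lemma alt_nth: "i < n \<Longrightarrow> alt_word c n ! i = (if even i then c else oth c)"
  by (simp add: alt_word_def oth_alt)

lemma length_alt[simp]: "length (alt_word c n) = n" by (simp add: alt_word_def)
lemma length_E[simp]: "length (E c m) = 2 * m" by (simp add: E_def)

lemma alternating_alt:
  assumes "alternating w"
  shows "w = alt_word (hd w) (length w)"
proof -
  have ne: "w \<noteq> []" using assms by (auto simp: alternating_def)
  have step: "w ! Suc i = oth (w ! i)" if "Suc i < length w" for i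
  proof -
    have "w ! (Suc (Suc i) - 2) \<noteq> w ! (Suc (Suc i) - 1)"
    proof -
      have "2 \<le> Suc (Suc i) \<and> Suc (Suc i) \<le> length w" using that by simp
      then show ?thesis using assms unfolding alternating_def by blast
    qed
    then have "w ! i \<noteq> w ! Suc i" by simp
    then show ?thesis using letter_cases[of "w ! Suc i" "w ! i"] by auto
  qed
  have "\<forall>i. i < length w \<longrightarrow> w ! i = (if even i then hd w else oth (hd w))"
  proof
    fix i show "i < length w \<longrightarrow> w ! i = (if even i then hd w else oth (hd w))"
      by (induction i) (auto simp: hd_conv_nth ne step)
  qed
  then show ?thesis by (intro nth_equalityI) (auto simp: alt_nth)
qed


lemmas fsim = f_Cons f_Nil_left f_Nil_right power_int_minus

lemma L1: "f q (E a m) [a] (a # E (oth a) m) = 1"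
  by (induction m) (auto simp: fsim)
lemma L2: "(q::'a::field) \<noteq> 0 \<Longrightarrow> f q [a] (E a m) (a # E (oth a) m) = 1"
  by (induction m) (auto simp: fsim)

context fixes q :: "'a::field" and a :: letter assumes q0: "q \<noteq> 0"
begin
lemma c1: "f q (oth a # E a m) [a] (a # oth a # E a m) = inverse (q^2)"
          "f q [a] (oth a # E a m) (a # oth a # E a m) = 1"
  using q0 by (cases m; simp add: fsim)+
lemma c2: "f q (oth a # a # E (oth a) m) [a] (oth a # a # a # E (oth a) m) = 1 + q^2"
          "f q [a] (oth a # a # E (oth a) m) (oth a # a # a # E (oth a) m) = inverse (q^2) * (1 + q^2)"
  using q0 by (cases m; simp add: fsim)+
lemma c3: "f q (a # oth a # E a m) [a] (a # a # oth a # E a m) = inverse (q^2) + 1"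
          "f q [a] (a # oth a # E a m) (a # a # oth a # E a m) = 1 + q^2"
  using q0 by (cases m; simp add: fsim)+
lemma c4: "f q (a # E (oth a) m) [oth a, a] (oth a # a # a # E (oth a) m) = inverse (q^2) * (1 + q^2)"
          "f q [oth a, a] (a # E (oth a) m) (oth a # a # a # E (oth a) m) = 1 + q^2"
  using q0 by (cases m; simp add: fsim)+
lemma c6: "f q (a # oth a # E a m) [oth a, a] (oth a # a # a # oth a # E a m) = inverse (q^2) + 1"
          "f q [oth a, a] (a # oth a # E a m) (oth a # a # a # oth a # E a m) = 1 + q^2"
  using q0 by (cases m; simp add: fsim)+
lemma c5: "f q (oth a # E a m) [oth a, a] (oth a # oth a # a # E (oth a) m) = 1 + q^2"
          "f q [oth a, a] (oth a # E a m) (oth a # oth a # a # E (oth a) m) = inverse (q^2) + 1"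
  using q0 L1[of q a m] L2[of q a m] by (cases m; simp add: fsim)+
end


lemma alt_odd: "alt_word c (2*m+1) = c # E (oth c) m"
  by (simp add: E_def alt_word_Suc)
lemma alt_even: "alt_word c (2*m+2) = E c (Suc m)"
  by (simp add: E_def)

lemma noncomm: "f q u v w \<noteq> f q v u w \<Longrightarrow> \<not> qcommute q (word u) (word v)"
  by (auto simp: qcommute_words)

lemma fAB: "a \<noteq> b \<Longrightarrow> f q [a] [b] w = (if w = [a,b] then 1 else 0) + (if w = [b,a] then q powi ip a b else 0)"
  by (cases w) (auto simp: fsim f_Nil_word)

lemma alt_shapes:
  assumes "alternating w"
  shows "\<exists>m. w = a # E (oth a) m \<or> w = a # oth a # E a m \<or> w = oth a # E a m \<or> w = oth a # a # E (oth a) m"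
proof -
  obtain h n where w: "w = alt_word h n" and n: "n \<ge> 1"
    using alternating_alt[OF assms] assms by (auto simp: alternating_def)
  have "\<exists>m. n = 2*m+1 \<or> n = 2*m+2"
    using n by presburger
  then obtain m where nm: "n = 2*m+1 \<or> n = 2*m+2" by blast
  have "h = a \<or> h = oth a" using letter_cases by blast
  have e: "alt_word c (2*m) = E c m" for c by (simp add: E_def)
  show ?thesis using \<open>h = a \<or> h = oth a\<close> nm w by (auto simp: alt_word_Suc e)
qed

context fixes q :: "'a::field" assumes q0: "q \<noteq> 0" and q2: "q^2 \<noteq> 1" and q4: "q^4 \<noteq> 1"
begin

lemma ineq1: "inverse (q^2) \<noteq> 1"
  using q2 q0 by (metis inverse_1 inverse_inverse_eq)
lemma ineq2: "inverse (q^2) + 1 \<noteq> 1 + q^2"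
proof
  assume "inverse (q^2) + 1 = 1 + q^2"
  then have "inverse (q^2) = q^2" by simp
  then have "q^2 * q^2 = 1" using q0 by (metis right_inverse power_not_zero)
  then show False using q4 by (simp add: power_mult_distrib flip: power_add)
qed
lemma ineq3: "1 + q^2 \<noteq> inverse (q^2) * (1 + q^2)"
proof
  assume h: "1 + q^2 = inverse (q^2) * (1 + q^2)"
  have "1 + q^2 \<noteq> 0"
  proof
    assume "1 + q^2 = 0" then have "q^2 = -1" by (simp add: add_eq_0_iff)
    moreover have "q^4 = q^2 * q^2" by (simp flip: power_add)
    ultimately have "q^4 = 1" by simp
    then show False using q4 by simp
  qed
  then have "inverse (q^2) = 1" using h by (metis mult_cancel_right1)
  then show False using ineq1 by simp
qed

lemma comm_A: "qcommute q (word (a # E (oth a) k)) (word (a # E (oth a) l))"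
  using main_ind[OF q0, of a] by (simp add: qcommute_words)
lemma comm_C: "qcommute q (word (E (oth a) k)) (word (E (oth a) l))"
  using main_ind[OF q0, of a] by (simp add: qcommute_words)

lemma part_ii:
  assumes "alternating w"
  shows "(\<exists>k. w = a # E (oth a) k) \<longleftrightarrow> qcommute q (word w) (word [a])"
proof -
  obtain m where "w = a # E (oth a) m \<or> w = a # oth a # E a m \<or> w = oth a # E a m \<or> w = oth a # a # E (oth a) m"
    using alt_shapes[OF assms] by blast
  then consider (ao) "w = a # E (oth a) m" | (ae) "w = a # oth a # E a m"
    | (bo) "w = oth a # E a m" | (be) "w = oth a # a # E (oth a) m"
    by blast
  then show ?thesis
  proof cases
    case ao
    have "qcommute q (word w) (word (a # E (oth a) 0))" using ao comm_A by blast
    then show ?thesis using ao by auto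
  next
    case ae
    have "\<not> qcommute q (word w) (word [a])"
      using ae c3[OF q0, of a m] ineq2 by (intro noncomm[of _ _ _ "a # a # oth a # E a m"]) simp
    moreover have "\<not> (\<exists>k. w = a # E (oth a) k)"
    proof
      assume "\<exists>k. w = a # E (oth a) k"
      then obtain k where "a # oth a # E a m = a # E (oth a) k" using ae by auto
      then have "length (a # oth a # E a m) = length (a # E (oth a) k)" by (rule arg_cong)
      then show False by simp presburger
    qed
    ultimately show ?thesis by blast
  next
    case bo
    have "\<not> qcommute q (word w) (word [a])"
      using bo c1[OF q0, of a m] ineq1 by (intro noncomm[of _ _ _ "a # oth a # E a m"]) simp
    then show ?thesis using bo by auto
  next
    case be
    have "\<not> qcommute q (word w) (word [a])"
      using be c2[OF q0, of a m] ineq3 by (intro noncomm[of _ _ _ "oth a # a # a # E (oth a) m"]) simp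
    then show ?thesis using be by auto
  qed
qed

lemma part_iv:
  assumes "alternating w"
  shows "(\<exists>k. w = E (oth a) (Suc k)) \<longleftrightarrow> qcommute q (word w) (word [oth a, a])"
proof -
  obtain m where "w = a # E (oth a) m \<or> w = a # oth a # E a m \<or> w = oth a # E a m \<or> w = oth a # a # E (oth a) m"
    using alt_shapes[OF assms] by blast
  then consider (ao) "w = a # E (oth a) m" | (ae) "w = a # oth a # E a m"
    | (bo) "w = oth a # E a m" | (be) "w = oth a # a # E (oth a) m"
    by blast
  then show ?thesis
  proof cases
    case be
    have "qcommute q (word w) (word (E (oth a) (Suc 0)))" using be comm_C[of a "Suc m" "Suc 0"] by simp
    then show ?thesis using be by auto
  next
    case ae
    have "\<not> qcommute q (word w) (word [oth a, a])"
      using ae c6[OF q0, of a m] ineq2 by (intro noncomm[of _ _ _ "oth a # a # a # oth a # E a m"]) simp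
    then show ?thesis using ae by auto
  next
    case ao
    have "\<not> qcommute q (word w) (word [oth a, a])"
      using ao c4[OF q0, of a m] not_sym[OF ineq3] by (intro noncomm[of _ _ _ "oth a # a # a # E (oth a) m"]) simp
    then show ?thesis using ao by auto
  next
    case bo
    have "\<not> qcommute q (word w) (word [oth a, a])"
      using bo c5[OF q0, of a m] not_sym[OF ineq2] by (intro noncomm[of _ _ _ "oth a # oth a # a # E (oth a) m"]) simp
    moreover have "\<not> (\<exists>k. w = E (oth a) (Suc k))"
    proof
      assume "\<exists>k. w = E (oth a) (Suc k)"
      then obtain k where "oth a # E a m = E (oth a) (Suc k)" using bo by auto
      then have "length (oth a # E a m) = length (E (oth a) (Suc k))" by (rule arg_cong)
      then show False by simp presburger
    qed
    ultimately show ?thesis by blast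
  qed
qed

end

lemma Wneg_eq: "Wneg k = X # E Y k" by (simp add: Wneg_def alt_odd[of X k, simplified])
lemma Wpos_eq: "Wpos k = Y # E X k" by (simp add: Wpos_def alt_odd[of Y k, simplified])
lemma G_eq: "G k = E Y (Suc k)" by (simp add: G_def alt_even[of Y k, simplified, symmetric])
lemma Gt_eq: "Gt k = E X (Suc k)" by (simp add: Gt_def alt_even[of X k, simplified, symmetric])

lemma Eelt:
  fixes q :: "'a::field"
  assumes q0: "q \<noteq> 0"
  shows "smul q (qprod q (word [oth a]) (word [a])) - smul (inverse q) (qprod q (word [a]) (word [oth a]))
     = Poly_Mapping.single [oth a, a] (q - inverse q ^ 3)"
proof (rule poly_mapping_eqI)
  fix w
  show "Poly_Mapping.lookup (smul q (qprod q (word [oth a]) (word [a])) - smul (inverse q) (qprod q (word [a]) (word [oth a]))) w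
      = Poly_Mapping.lookup (Poly_Mapping.single [oth a, a] (q - inverse q ^ 3)) w"
    unfolding lookup_minus lookup_smul qprod_word f_def[symmetric]
    using q0 by (simp add: fAB lookup_single when_def power_int_minus field_simps power2_eq_square power3_eq_cube)
qed

lemma const_ne:
  fixes q :: "'a::field"
  assumes q0: "q \<noteq> 0" and q4: "q^4 \<noteq> 1"
  shows "q - inverse q ^ 3 \<noteq> 0"
proof
  assume "q - inverse q ^ 3 = 0"
  then have "q * q^3 = inverse q ^ 3 * q ^ 3" by simp
  also have "\<dots> = 1" using q0 by (simp flip: power_mult_distrib)
  finally have "q^4 = 1" by (simp flip: power_Suc)
  then show False using q4 by simp
qed


theorem lemma5p12:
  fixes q :: "'a::field"
  assumes "q \<noteq> 0" and "\<forall>n::nat. n \<ge> 1 \<longrightarrow> q ^ n \<noteq> 1"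
  shows
   "(\<forall>k l. qcommute q (word (Wneg k)) (word (Wneg l)))
  \<and> (\<forall>k l. qcommute q (word (Wpos k)) (word (Wpos l)))
  \<and> (\<forall>k l. qcommute q (word (G k)) (word (G l)))
  \<and> (\<forall>k l. qcommute q (word (Gt k)) (word (Gt l)))
  \<and> (\<forall>w. alternating w \<longrightarrow>
        ((\<exists>k. w = Wneg k) \<longleftrightarrow> qcommute q (word w) (word [X])))
  \<and> (\<forall>w. alternating w \<longrightarrow>
        ((\<exists>k. w = Wpos k) \<longleftrightarrow> qcommute q (word w) (word [Y])))
  \<and> (\<forall>w. alternating w \<longrightarrow>
        ((\<exists>k. w = G k) \<longleftrightarrow> qcommute q (word w)
           (smul q (qprod q (word [Y]) (word [X])) - smul (inverse q) (qprod q (word [X]) (word [Y])))))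
  \<and> (\<forall>w. alternating w \<longrightarrow>
        ((\<exists>k. w = Gt k) \<longleftrightarrow> qcommute q (word w)
           (smul q (qprod q (word [X]) (word [Y])) - smul (inverse q) (qprod q (word [Y]) (word [X])))))"
proof -
  note q0 = assms(1)
  have q2: "q^2 \<noteq> 1" using assms(2) by auto
  have q4: "q^4 \<noteq> 1" using assms(2) by auto
  have cne: "q - inverse q ^ 3 \<noteq> 0" using const_ne[OF q0 q4] .
  have e1: "smul q (qprod q (word [Y]) (word [X])) - smul (inverse q) (qprod q (word [X]) (word [Y]))
     = Poly_Mapping.single [Y, X] (q - inverse q ^ 3)"
    using Eelt[OF q0, of X] by simp
  have e2: "smul q (qprod q (word [X]) (word [Y])) - smul (inverse q) (qprod q (word [Y]) (word [X]))
     = Poly_Mapping.single [X, Y] (q - inverse q ^ 3)"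
    using Eelt[OF q0, of Y] by simp
  have i1: "\<forall>k l. qcommute q (word (Wneg k)) (word (Wneg l))"
    using comm_A[OF q0 q2 q4, of X] by (simp add: Wneg_eq)
  have i2: "\<forall>k l. qcommute q (word (Wpos k)) (word (Wpos l))"
    using comm_A[OF q0 q2 q4, of Y] by (simp add: Wpos_eq)
  have i3: "\<forall>k l. qcommute q (word (G k)) (word (G l))"
    using comm_C[OF q0 q2 q4, of X] unfolding G_eq by (metis oth.simps(1))
  have i4: "\<forall>k l. qcommute q (word (Gt k)) (word (Gt l))"
    using comm_C[OF q0 q2 q4, of Y] unfolding Gt_eq by (metis oth.simps(2))
  have ii: "\<forall>w. alternating w \<longrightarrow> ((\<exists>k. w = Wneg k) \<longleftrightarrow> qcommute q (word w) (word [X]))"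
    using part_ii[OF q0 q2 q4, of _ X] by (simp add: Wneg_eq)
  have iii: "\<forall>w. alternating w \<longrightarrow> ((\<exists>k. w = Wpos k) \<longleftrightarrow> qcommute q (word w) (word [Y]))"
    using part_ii[OF q0 q2 q4, of _ Y] by (simp add: Wpos_eq)
  have iv: "\<forall>w. alternating w \<longrightarrow> ((\<exists>k. w = G k) \<longleftrightarrow> qcommute q (word w)
           (smul q (qprod q (word [Y]) (word [X])) - smul (inverse q) (qprod q (word [X]) (word [Y]))))"
    unfolding e1 qcommute_single[OF cne]
    using part_iv[OF q0 q2 q4, of _ X] by (simp add: G_eq)
  have v: "\<forall>w. alternating w \<longrightarrow> ((\<exists>k. w = Gt k) \<longleftrightarrow> qcommute q (word w)
           (smul q (qprod q (word [X]) (word [Y])) - smul (inverse q) (qprod q (word [Y]) (word [X]))))"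
    unfolding e2 qcommute_single[OF cne]
    using part_iv[OF q0 q2 q4, of _ Y] by (simp add: Gt_eq)
  show ?thesis using i1 i2 i3 i4 ii iii iv v by blast
qed

end
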